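(* Let $n\ge5$ and $S\subseteq V(C_n)$. Suppose (1) every gap of $S$ contains at most $3$ vertices, and at most one gap of $S$ contains $3$ vertices; and (2) if a gap of $S$ contains at least $2$ vertices, then its neighboring gaps contain at most $1$ vertex. Then $S$ is a distance-$1$ resolving set of $C_n$.
   Context: $C_n$ is the cycle on $n$ vertices. $d$ is the shortest-path distance and $d_1(x,y)=\min\{d(x,y),2\}$; $S$ is a distance-$1$ resolving set if for all distinct $x,y$ some $z\in S$ has $d_1(x,z)\ne d_1(y,z)$. For a set $M$ of at least two vertices of $C_n$ and distinct $u_i,u_j\in M$, let $P,P'$ be the two $u_i$–$u_j$ paths in $C_n$. If one of them, say $P$, contains no vertices of $M$ other than $u_i,u_j$, then $u_i,u_j$ are neighboring vertices of $M$ and $V(P)-\{u_i,u_j\}$ is a gap of $M$ (possibly empty). The two gaps determined by a vertex of $M$ and its two neighboring vertices of $M$ are called neighboring gaps. A set $M$ with $|M|=r$ has $r$ gaps. *)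

theory Defs
  imports Main
begin

text \<open>The cycle C_n has vertex set {0..<n}, vertex i adjacent to (i+1) mod n.\<close>

definition cyc_dist :: "nat \<Rightarrow> nat \<Rightarrow> nat \<Rightarrow> nat" where
  "cyc_dist n x y = min ((x + n - y) mod n) ((y + n - x) mod n)"

definition dist1 :: "nat \<Rightarrow> nat \<Rightarrow> nat \<Rightarrow> nat" where
  "dist1 n x y = min (cyc_dist n x y) 2"

definition dist1_resolving :: "nat \<Rightarrow> nat set \<Rightarrow> bool" where
  "dist1_resolving n S \<longleftrightarrow> S \<subseteq> {..<n} \<and>
     (\<forall>x<n. \<forall>y<n. x \<noteq> y \<longrightarrow> (\<exists>z\<in>S. dist1 n x z \<noteq> dist1 n y z))"

definition cw_step :: "nat \<Rightarrow> nat set \<Rightarrow> nat \<Rightarrow> nat" where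
  "cw_step n S u = (LEAST k. 0 < k \<and> (u + k) mod n \<in> S)"

definition next_in :: "nat \<Rightarrow> nat set \<Rightarrow> nat \<Rightarrow> nat" where
  "next_in n S u = (u + cw_step n S u) mod n"

definition gap :: "nat \<Rightarrow> nat set \<Rightarrow> nat \<Rightarrow> nat set" where
  "gap n S u = {(u + k) mod n | k. 0 < k \<and> k < cw_step n S u}"

end

theory Submission imports Defs begin

lemma mod_if2: "(a::nat) < 2*n \<Longrightarrow> a mod n = (if a < n then a else a - n)"
  by (simp add: le_mod_geq)

lemma dist1_lt:
  assumes "x < z" "z < n" "n \<ge> 3"
  shows "dist1 n x z = (if z = (x+1) mod n \<or> x = (z+1) mod n then 1 else 2)"
proof -
  have a: "(x + n - z) mod n = x + n - z" using assms by simp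
  have b: "(z + n - x) mod n = z - x" using assms by (subst mod_if2) auto
  have c: "(x+1) mod n = x+1" using assms by simp
  have d: "(z+1) mod n = (if z + 1 < n then z+1 else 0)" using assms by (subst mod_if2) auto
  show ?thesis unfolding dist1_def cyc_dist_def a b c d using assms by (auto simp: min_def)
qed

lemma dist1_sym: "dist1 n x z = dist1 n z x"
  unfolding dist1_def cyc_dist_def by (simp add: min.commute)

lemma dist1_cases:
  assumes "x < n" "z < n" "n \<ge> 3"
  shows "dist1 n x z = (if x = z then 0 else if z = (x+1) mod n \<or> x = (z+1) mod n then 1 else 2)"
proof (cases x z rule: linorder_cases)
  case less
  then show ?thesis using dist1_lt[OF less assms(2,3)] by simp
next
  case equal
  then show ?thesis unfolding dist1_def cyc_dist_def by simp
next
  case greater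
  then show ?thesis using dist1_lt[OF greater assms(1,3)] dist1_sym[of n x z] by auto
qed

lemma cw_props:
  assumes "u \<in> S" "S \<subseteq> {..<n}"
  shows "0 < cw_step n S u" "cw_step n S u \<le> n" "(u + cw_step n S u) mod n \<in> S"
    "\<And>k. 0 < k \<Longrightarrow> k < cw_step n S u \<Longrightarrow> (u + k) mod n \<notin> S"
proof -
  have un: "u < n" using assms by auto
  have w: "0 < n \<and> (u + n) mod n \<in> S" using assms un by auto
  show "0 < cw_step n S u" "(u + cw_step n S u) mod n \<in> S"
    unfolding cw_step_def using LeastI[where P="\<lambda>k. 0 < k \<and> (u + k) mod n \<in> S", OF w] by auto
  show "cw_step n S u \<le> n" unfolding cw_step_def by (rule Least_le) (use w in auto)
  fix k assume "0 < k" "k < cw_step n S u"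
  then show "(u + k) mod n \<notin> S" unfolding cw_step_def using not_less_Least by blast
qed

lemma card_gap:
  assumes "u \<in> S" "S \<subseteq> {..<n}"
  shows "card (gap n S u) = cw_step n S u - 1"
proof -
  have un: "u < n" using assms by auto
  have "gap n S u = (\<lambda>k. (u+k) mod n) ` {0<..<cw_step n S u}" unfolding gap_def by auto
  moreover have "inj_on (\<lambda>k. (u+k) mod n) {0<..<cw_step n S u}"
  proof
    fix a b assume "a \<in> {0<..<cw_step n S u}" "b \<in> {0<..<cw_step n S u}" "(u+a) mod n = (u+b) mod n"
    moreover have "cw_step n S u \<le> n" using cw_props assms by auto
    ultimately show "a = b" using un by (auto simp: mod_if2 split: if_splits)
  qed
  ultimately show ?thesis by (simp add: card_image)
qed


lemma sucm: "(a::nat) < n \<Longrightarrow> (a+1) mod n = (if a + 1 < n then a + 1 else 0)"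
  by (subst mod_if2) auto

lemma suc_inj: "(a::nat) < n \<Longrightarrow> b < n \<Longrightarrow> (a+1) mod n = (b+1) mod n \<Longrightarrow> a = b"
proof -
  assume "a < n" "b < n" "(a+1) mod n = (b+1) mod n"
  thus "a = b" unfolding sucm[OF \<open>a < n\<close>] sucm[OF \<open>b < n\<close>] by (auto split: if_splits)
qed

lemma in_gap:
  assumes "x < n" "x \<notin> S" "s \<in> S" "S \<subseteq> {..<n}"
  shows "\<exists>w\<in>S. \<exists>k. 0 < k \<and> k < cw_step n S w \<and> x = (w+k) mod n"
proof -
  define P where "P j \<longleftrightarrow> 0 < j \<and> (x + n - j) mod n \<in> S" for j
  have sn: "s < n" using assms by auto
  define j0 where "j0 = (if s \<le> x then x - s else x + n - s)"
  have "s \<noteq> x" using assms by auto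
  hence Pj0: "P j0" unfolding P_def j0_def using sn assms(1) assms(3) by (auto simp: mod_if2)
  have j0n: "j0 < n" unfolding j0_def using sn assms(1) by auto
  define j where "j = (LEAST j. P j)"
  have Pj: "P j" unfolding j_def using LeastI[of P, OF Pj0] .
  have jle: "j \<le> j0" unfolding j_def using Least_le[of P, OF Pj0] .
  hence jn: "j < n" using j0n by auto
  define w where "w = (x + n - j) mod n"
  have wS: "w \<in> S" using Pj unfolding P_def w_def by auto
  have wj: "(w + j) mod n = x" unfolding w_def using jn assms(1) by (auto simp: mod_if2)
  have notin: "(w + k) mod n \<notin> S" if "0 < k" "k < j" for k
  proof -
    have "\<not> P (j - k)" unfolding j_def by (rule not_less_Least) (use that in \<open>auto simp: j_def\<close>)
    moreover have "(w + k) mod n = (x + n - (j - k)) mod n"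
      unfolding w_def using jn assms(1) that by (auto simp: mod_if2)
    ultimately show ?thesis using that unfolding P_def by auto
  qed
  have "j < cw_step n S w"
  proof (rule ccontr)
    assume "\<not> j < cw_step n S w"
    hence "cw_step n S w \<le> j" by simp
    moreover have "0 < cw_step n S w" "(w + cw_step n S w) mod n \<in> S" using cw_props[OF wS assms(4)] by auto
    ultimately show False using notin wj assms(2) by (cases "cw_step n S w = j") auto
  qed
  thus ?thesis using wS wj Pj unfolding P_def by blast
qed


lemma no4: "x < n \<Longrightarrow> 5 \<le> n \<Longrightarrow> x \<noteq> ((x::nat) + 4) mod n"
  by (subst mod_if2) auto

lemma chain4: "a = ((((a+1) mod n + 1) mod n + 1) mod n + 1) mod n \<Longrightarrow> (a::nat) < n \<Longrightarrow> 5 \<le> n \<Longrightarrow> False"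
proof -
  assume h: "a = ((((a+1) mod n + 1) mod n + 1) mod n + 1) mod n" and an: "a < n" and n5: "5 \<le> n"
  have "((((a+1) mod n + 1) mod n + 1) mod n + 1) mod n = (a+4) mod n"
  proof -
    have e: "a + 4 = a + (1 + (1 + (1 + 1)))" by simp
    show ?thesis unfolding e by (simp only: mod_add_left_eq add.assoc)
  qed
  with h have "a = (a+4) mod n" by (rule trans)
  thus False using no4[OF an n5] by blast
qed

lemma case2:
  assumes n5: "n \<ge> 5" and SS: "S \<subseteq> {..<n}"
    and h6: "\<forall>u\<in>S. card (gap n S u) \<ge> 2 \<longrightarrow>
           card (gap n S (next_in n S u)) \<le> 1 \<and>
           (\<forall>w\<in>S. next_in n S w = u \<longrightarrow> card (gap n S w) \<le> 1)"
    and xn: "x < n" and yn: "y < n" and xy: "x \<noteq> y" and yS: "y \<notin> S"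
    and H: "\<forall>z\<in>S. (z = (x+1) mod n \<or> x = (z+1) mod n) \<longleftrightarrow> (z = (y+1) mod n \<or> y = (z+1) mod n)"
    and wS: "w \<in> S" and k2: "k \<ge> 2" and kc: "k + 1 = cw_step n S w" and xw: "x = (w+k) mod n"
  shows False
proof -
  define s where "s = (x+1) mod n"
  have sn: "s < n" unfolding s_def using n5 by auto
  have "s = (w + cw_step n S w) mod n" unfolding s_def xw kc[symmetric] by (simp add: mod_add_left_eq mod_Suc_eq add.assoc)
  hence sS: "s \<in> S" using cw_props[OF wS SS] by simp
  have "s = (y+1) mod n \<or> y = (s+1) mod n" using H sS s_def by blast
  moreover have "s \<noteq> (y+1) mod n" using suc_inj[OF xn yn] xy unfolding s_def by blast
  ultimately have ys: "y = (s+1) mod n" by blast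
  have y1: "(y+1) mod n \<notin> S"
  proof
    assume "(y+1) mod n \<in> S"
    hence "(y+1) mod n = (x+1) mod n \<or> x = ((y+1) mod n+1) mod n" using H by blast
    moreover have "(y+1) mod n \<noteq> (x+1) mod n" using suc_inj[OF yn xn] xy by blast
    ultimately have "x = ((y+1) mod n+1) mod n" by blast
    hence "x = ((((x+1) mod n + 1) mod n + 1) mod n+1) mod n" unfolding ys s_def .
    thus False using chain4[OF _ xn n5] by blast
  qed
  have c3: "cw_step n S s \<ge> 3"
  proof (rule ccontr)
    assume "\<not> ?thesis"
    moreover have "0 < cw_step n S s" "(s + cw_step n S s) mod n \<in> S" using cw_props[OF sS SS] by auto
    moreover have "(s + 2) mod n = ((s+1) mod n + 1) mod n" by (simp add: mod_add_left_eq mod_Suc_eq)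
    ultimately have "cw_step n S s = 1 \<or> cw_step n S s = 2" by linarith
    thus False
    proof
      assume "cw_step n S s = 1"
      thus False using ys yS \<open>(s + cw_step n S s) mod n \<in> S\<close> by simp
    next
      assume "cw_step n S s = 2"
      thus False using ys y1 \<open>(s + cw_step n S s) mod n \<in> S\<close> \<open>(s + 2) mod n = ((s+1) mod n + 1) mod n\<close> by simp
    qed
  qed
  have g2: "card (gap n S s) \<ge> 2" using card_gap[OF sS SS] c3 by simp
  have nx: "next_in n S w = s" unfolding next_in_def using \<open>s = (w + cw_step n S w) mod n\<close> by simp
  have gw: "card (gap n S w) \<ge> 2" using card_gap[OF wS SS] kc k2 by simp
  have "\<forall>w'\<in>S. next_in n S w' = s \<longrightarrow> card (gap n S w') \<le> 1" using bspec[OF h6 sS] g2 by blast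
  hence "card (gap n S w) \<le> 1" using wS nx by blast
  thus False using gw by linarith
qed

lemma if12: "(if (A::bool) then (1::nat) else 2) = (if B then 1 else 2) \<Longrightarrow> A = B"
  by (cases A; cases B) auto

theorem lemma3p3:
  fixes n :: nat and S :: "nat set"
  assumes "n \<ge> 5"
    and "S \<subseteq> {..<n}"
    and "card S \<ge> 2"
    and "\<forall>u\<in>S. card (gap n S u) \<le> 3"
    and "card {u\<in>S. card (gap n S u) = 3} \<le> 1"
    and "\<forall>u\<in>S. card (gap n S u) \<ge> 2 \<longrightarrow>
           card (gap n S (next_in n S u)) \<le> 1 \<and>
           (\<forall>w\<in>S. next_in n S w = u \<longrightarrow> card (gap n S w) \<le> 1)"
  shows "dist1_resolving n S"
proof -
  note n5 = assms(1) and SS = assms(2) and h6 = assms(6)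
  have finS: "finite S" using assms(3) by (metis card.infinite not_numeral_le_zero)
  have "S \<noteq> {}" using assms(3) by (metis card.empty not_numeral_le_zero)
  then obtain s0 where s0: "s0 \<in> S" by blast
  have n3: "n \<ge> 3" using n5 by simp
  have main: "\<exists>z\<in>S. dist1 n x z \<noteq> dist1 n y z" if xn: "x < n" and yn: "y < n" and xy: "x \<noteq> y" for x y
  proof (cases "x \<in> S \<or> y \<in> S")
    case True
    then show ?thesis
    proof
      assume xS: "x \<in> S"
      have "dist1 n x x = 0" by (subst dist1_cases[OF xn xn n3]) simp
      moreover have "dist1 n y x \<noteq> 0" using xy by (subst dist1_cases[OF yn xn n3]) simp
      ultimately show ?thesis using xS by metis
    next
      assume yS: "y \<in> S"
      have "dist1 n y y = 0" by (subst dist1_cases[OF yn yn n3]) simp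
      moreover have "dist1 n x y \<noteq> 0" using xy by (subst dist1_cases[OF xn yn n3]) simp
      ultimately show ?thesis using yS by metis
    qed
  next
    case False
    hence xS: "x \<notin> S" and yS: "y \<notin> S" by auto
    show ?thesis
    proof (rule ccontr)
      assume "\<not> ?thesis"
      hence eq: "\<forall>z\<in>S. dist1 n x z = dist1 n y z" by blast
      have H: "\<forall>z\<in>S. (z = (x+1) mod n \<or> x = (z+1) mod n) \<longleftrightarrow> (z = (y+1) mod n \<or> y = (z+1) mod n)"
      proof
        fix z assume zS: "z \<in> S"
        hence zn: "z < n" using SS by auto
        have "z \<noteq> x" "z \<noteq> y" using zS xS yS by auto
        show "(z = (x+1) mod n \<or> x = (z+1) mod n) \<longleftrightarrow> (z = (y+1) mod n \<or> y = (z+1) mod n)"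
        proof (rule if12)
          have d1: "dist1 n x z = (if z = (x+1) mod n \<or> x = (z+1) mod n then 1 else 2)"
            using \<open>z \<noteq> x\<close> by (subst dist1_cases[OF xn zn n3]) (simp only: if_False eq_commute[of x z])
          have d2: "dist1 n y z = (if z = (y+1) mod n \<or> y = (z+1) mod n then 1 else 2)"
            using \<open>z \<noteq> y\<close> by (subst dist1_cases[OF yn zn n3]) (simp only: if_False eq_commute[of y z])
          show "(if z = (x+1) mod n \<or> x = (z+1) mod n then 1 else 2) = (if z = (y+1) mod n \<or> y = (z+1) mod n then 1 else (2::nat))"
            using bspec[OF eq zS] by (simp only: d1 d2)
        qed
      qed
      have H': "\<forall>z\<in>S. (z = (y+1) mod n \<or> y = (z+1) mod n) \<longleftrightarrow> (z = (x+1) mod n \<or> x = (z+1) mod n)"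
        using H by blast
      obtain w k where wS: "w \<in> S" and k0: "0 < k" and kc: "k < cw_step n S w" and xw: "x = (w+k) mod n"
        using in_gap[OF xn xS s0 SS] by blast
      obtain v m where vS: "v \<in> S" and m0: "0 < m" and mc: "m < cw_step n S v" and yv: "y = (v+m) mod n"
        using in_gap[OF yn yS s0 SS] by blast
      have wn: "w < n" and vn: "v < n" using wS vS SS by auto
      consider "k = 1" | "k \<ge> 2" "k + 1 = cw_step n S w" | "k \<ge> 2" "k + 1 < cw_step n S w"
        using k0 kc by linarith
      then show False
      proof cases
        case 1
        hence xw1: "x = (w+1) mod n" using xw by simp
        have "w = (y+1) mod n \<or> y = (w+1) mod n" using H wS xw1 by blast
        hence wy: "w = (y+1) mod n" using xy xw1 by metis
        have "(v + (m+1)) mod n = w" using wy yv by (simp add: mod_add_left_eq mod_Suc_eq add.assoc)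
        hence "\<not> m + 1 < cw_step n S v" using cw_props(4)[OF vS SS, of "m+1"] wS by auto
        hence mc1: "m + 1 = cw_step n S v" using mc by simp
        have m2: "m \<ge> 2"
        proof (rule ccontr)
          assume "\<not> m \<ge> 2"
          hence "m = 1" using m0 by simp
          hence yv1: "y = (v+1) mod n" using yv by simp
          hence "v = (x+1) mod n \<or> x = (v+1) mod n" using H vS by blast
          hence vx: "v = (x+1) mod n" using xy yv1 by metis
          have "v = ((((v+1) mod n + 1) mod n + 1) mod n + 1) mod n" using vx unfolding xw1 wy yv1 .
          thus False using chain4[OF _ vn n5] by blast
        qed
        show False using case2[OF n5 SS h6 yn xn _ xS H' vS m2 mc1 yv] xy by simp
      next
        case 2
        show False using case2[OF n5 SS h6 xn yn xy yS H wS 2 xw] .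
      next
        case 3
        have "card (gap n S w) \<le> 3" using assms(4) wS by blast
        hence "cw_step n S w \<le> 4" using card_gap[OF wS SS] by linarith
        hence c4: "cw_step n S w = 4" "k = 2" using 3 by auto
        have noadj: "\<forall>z\<in>S. \<not> (z = (x+1) mod n \<or> x = (z+1) mod n)"
        proof (intro ballI notI)
          fix z assume zS: "z \<in> S" and adj: "z = (x+1) mod n \<or> x = (z+1) mod n"
          have zn: "z < n" using zS SS by auto
          have "(x+1) mod n = (w+2+1) mod n" using xw c4 by (simp only: mod_add_left_eq)
          moreover have "w+2+1 = w+(3::nat)" by simp
          ultimately have e1: "(x+1) mod n = (w+3) mod n" by (simp only:)
          have "((w+1) mod n + 1) mod n = (w+1+1) mod n" by (simp only: mod_add_left_eq)
          moreover have "w+1+1 = w+(2::nat)" by simp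
          ultimately have e2: "x = ((w+1) mod n + 1) mod n" using xw c4 by (simp only:)
          have n1: "(w+3) mod n \<notin> S" "(w+1) mod n \<notin> S" using cw_props(4)[OF wS SS, of 3] cw_props(4)[OF wS SS, of 1] c4(1) by linarith+
          from adj show False
          proof
            assume "z = (x+1) mod n" thus False using e1 n1 zS by simp
          next
            assume "x = (z+1) mod n"
            hence "(z+1) mod n = ((w+1) mod n + 1) mod n" using e2 by (rule trans[OF sym])
            moreover have "(w+1) mod n < n" using n5 by simp
            ultimately have "z = (w+1) mod n" using suc_inj[OF zn] by blast
            thus False using n1 zS by simp
          qed
        qed
        hence noadjy: "\<forall>z\<in>S. \<not> (z = (y+1) mod n \<or> y = (z+1) mod n)" using H by blast
        have "m \<noteq> 1"
        proof
          assume "m = 1"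
          hence "y = (v+1) mod n" using yv by simp
          thus False using noadjy vS by blast
        qed
        moreover have "m + 1 \<noteq> cw_step n S v"
        proof
          assume "m + 1 = cw_step n S v"
          have "(y+1) mod n = (v + (m+1)) mod n" unfolding yv by (simp only: mod_add_left_eq add.assoc)
          hence "(y+1) mod n = (v + cw_step n S v) mod n" unfolding \<open>m + 1 = cw_step n S v\<close> .
          thus False using noadjy cw_props(3)[OF vS SS] by auto
        qed
        moreover have "cw_step n S v \<le> 4"
        proof -
          have "card (gap n S v) \<le> 3" using assms(4) vS by blast
          thus ?thesis using card_gap[OF vS SS] by linarith
        qed
        ultimately have c4v: "cw_step n S v = 4" "m = 2" using m0 mc by linarith+
        have "v \<noteq> w" using xy xw yv c4 c4v by auto
        moreover have "{w, v} \<subseteq> {u\<in>S. card (gap n S u) = 3}"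
          using wS vS card_gap[OF wS SS] card_gap[OF vS SS] c4 c4v by auto
        ultimately have "card {w, v} \<le> card {u\<in>S. card (gap n S u) = 3}"
          using finS by (intro card_mono) auto
        thus False using assms(5) \<open>v \<noteq> w\<close> by simp
      qed
    qed
  qed
  show ?thesis unfolding dist1_resolving_def using SS main by blast
qed

end
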